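(* If $\rho$ is an invariant state supported on $\Omega=\{|-\rangle,|+\rangle,\varphi_{0_1},\varphi_{0_N}\}^\perp$, then $\rho Z_k=e^{\beta_k}Z_k\rho$ for all $k=1,\dots,N-1$.
   Context: Fix integers $N\ge 2$ and $n_1\ge n_2\ge\dots\ge n_N\ge 1$. Let $\mathcal H$ be a finite-dimensional complex Hilbert space with orthonormal basis $\{|-\rangle,|+\rangle\}\cup\{|a_k\rangle:1\le k\le N,\ 0\le a\le n_k-1\}$. For vectors $x,y$, $|x\rangle\langle y|$ denotes the operator $u\mapsto\langle y,u\rangle x$. Put $E_k=\mathrm{span}\{|a_k\rangle:0\le a\le n_k-1\}$, $P_k$ the orthogonal projection onto $E_k$, $P_\pm=|\pm\rangle\langle\pm|$, $\zeta_k=e^{2\pi i/n_k}$, and $\varphi_{a_k}=n_k^{-1/2}\sum_{b=0}^{n_k-1}\zeta_k^{-ba}|b_k\rangle$ for $0\le a\le n_k-1$. For $1\le k\le N-1$ let $Z_k=n_k^{-1/2}\sum_{b=0}^{n_{k+1}-1}\sum_{a=0}^{n_k-1}\zeta_k^{ba}|b_{k+1}\rangle\langle a_k|$ (an operator on $\mathcal H$), $|Z|_k=Z_k^*Z_k$. Let $\omega$ range over the set $\{\omega_+,\omega_-,\omega_1,\dots,\omega_{N-1}\}$ of (distinct) Bohr frequencies, and let $\Gamma_{\pm,\omega}>0$, $\gamma_{\pm,\omega}\in\mathbb R$ be constants. Kraus operators: $L_{-,\omega_+}=\sqrt{n_1\Gamma_{-,\omega_+}}|\varphi_{0_1}\rangle\langle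 +|$, $L_{+,\omega_+}=\sqrt{n_1\Gamma_{+,\omega_+}}|+\rangle\langle\varphi_{0_1}|$, $L_{-,\omega_k}=\sqrt{\Gamma_{-,\omega_k}}Z_k$, $L_{+,\omega_k}=\sqrt{\Gamma_{+,\omega_k}}Z_k^*$ ($1\le k\le N-1$), $L_{-,\omega_-}=\sqrt{\Gamma_{-,\omega_-}}|-\rangle\langle\varphi_{0_N}|$, $L_{+,\omega_-}=0$. Effective Hamiltonian $H_{\mathrm{eff}}=n_1\gamma_{-,\omega_+}P_+-n_1\gamma_{+,\omega_+}|\varphi_{0_1}\rangle\langle\varphi_{0_1}|+\gamma_{-,\omega_-}|\varphi_{0_N}\rangle\langle\varphi_{0_N}|-\gamma_{+,\omega_-}P_-+\sum_{k=1}^{N-1}(\gamma_{-,\omega_k}|Z|_k-\gamma_{+,\omega_k}P_{k+1})$. The generator is $\mathcal L(\rho)=-i[H_{\mathrm{eff}},\rho]+\sum_{\omega}\sum_{\epsilon=\pm}\big(L_{\epsilon,\omega}\rho L_{\epsilon,\omega}^*-\tfrac12\{L_{\epsilon,\omega}^*L_{\epsilon,\omega},\rho\}\big)$. A state is a positive operator of trace one; it is invariant if $\mathcal L(\rho)=0$; an operator is supported on a subspace $E$ if its range is contained in $E$. Define $\beta_k$ by $e^{\beta_k}=\Gamma_{-,\omega_k}/\Gamma_{+,\omega_k}$ for $1\le k\le N-1$. *)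

theory Defs
  imports Complex_Main "HOL-Library.Function_Algebras"
begin

text \<open>Orthonormal basis labels: Minus = |->, Plus = |+>, Site k a = |a_k>
  (k in 1..N, a in 0..n_k - 1).  Vectors are functions on labels, operators
  are matrices (functions of two labels); only labels in the basis set matter.\<close>

datatype idx = Minus | Plus | Site nat nat

datatype freq = Wplus | Wminus | W nat

type_synonym vec = "idx \<Rightarrow> complex"
type_synonym op = "idx \<Rightarrow> idx \<Rightarrow> complex"

definition basis :: "nat \<Rightarrow> (nat \<Rightarrow> nat) \<Rightarrow> idx set" where
  "basis N n = {Minus, Plus} \<union> {Site k a | k a. 1 \<le> k \<and> k \<le> N \<and> a < n k}"

definition is_op :: "nat \<Rightarrow> (nat \<Rightarrow> nat) \<Rightarrow> op \<Rightarrow> bool" where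
  "is_op N n A \<longleftrightarrow> (\<forall>i j. (i \<notin> basis N n \<or> j \<notin> basis N n) \<longrightarrow> A i j = 0)"

definition ket :: "idx \<Rightarrow> vec" where
  "ket i = (\<lambda>j. if j = i then 1 else 0)"

definition inner_H :: "nat \<Rightarrow> (nat \<Rightarrow> nat) \<Rightarrow> vec \<Rightarrow> vec \<Rightarrow> complex" where
  "inner_H N n x y = (\<Sum>i\<in>basis N n. cnj (x i) * y i)"

definition ketbra :: "vec \<Rightarrow> vec \<Rightarrow> op" where
  "ketbra x y = (\<lambda>i j. x i * cnj (y j))"

definition mmult :: "nat \<Rightarrow> (nat \<Rightarrow> nat) \<Rightarrow> op \<Rightarrow> op \<Rightarrow> op" where
  "mmult N n A C = (\<lambda>i j. \<Sum>l\<in>basis N n. A i l * C l j)"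

definition app :: "nat \<Rightarrow> (nat \<Rightarrow> nat) \<Rightarrow> op \<Rightarrow> vec \<Rightarrow> vec" where
  "app N n A x = (\<lambda>i. \<Sum>j\<in>basis N n. A i j * x j)"

definition adj :: "op \<Rightarrow> op" where
  "adj A = (\<lambda>i j. cnj (A j i))"

definition smult :: "complex \<Rightarrow> op \<Rightarrow> op" where
  "smult c A = (\<lambda>i j. c * A i j)"

definition trace_H :: "nat \<Rightarrow> (nat \<Rightarrow> nat) \<Rightarrow> op \<Rightarrow> complex" where
  "trace_H N n A = (\<Sum>i\<in>basis N n. A i i)"

definition is_state :: "nat \<Rightarrow> (nat \<Rightarrow> nat) \<Rightarrow> op \<Rightarrow> bool" where
  "is_state N n A \<longleftrightarrow> is_op N n A
     \<and> (\<forall>x. Im (inner_H N n x (app N n A x)) = 0 \<and> Re (inner_H N n x (app N n A x)) \<ge> 0)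
     \<and> trace_H N n A = 1"

definition zeta :: "(nat \<Rightarrow> nat) \<Rightarrow> nat \<Rightarrow> complex" where
  "zeta n k = cis (2 * pi / real (n k))"

definition phi :: "(nat \<Rightarrow> nat) \<Rightarrow> nat \<Rightarrow> nat \<Rightarrow> vec" where
  "phi n k a = (\<lambda>i. \<Sum>b<n k. (1 / complex_of_real (sqrt (real (n k))))
                          * inverse (zeta n k) ^ (b * a) * ket (Site k b) i)"

definition Zop :: "(nat \<Rightarrow> nat) \<Rightarrow> nat \<Rightarrow> op" where
  "Zop n k = (\<lambda>i j. \<Sum>b<n (Suc k). \<Sum>a<n k.
       (1 / complex_of_real (sqrt (real (n k)))) * zeta n k ^ (b * a)
       * ketbra (ket (Site (Suc k) b)) (ket (Site k a)) i j)"

definition Proj :: "(nat \<Rightarrow> nat) \<Rightarrow> nat \<Rightarrow> op" where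
  "Proj n k = (\<lambda>i j. \<Sum>a<n k. ketbra (ket (Site k a)) (ket (Site k a)) i j)"

definition dissip :: "nat \<Rightarrow> (nat \<Rightarrow> nat) \<Rightarrow> op \<Rightarrow> op \<Rightarrow> op" where
  "dissip N n L \<rho> = mmult N n (mmult N n L \<rho>) (adj L)
     - smult (1/2) (mmult N n (mmult N n (adj L) L) \<rho> + mmult N n \<rho> (mmult N n (adj L) L))"

definition Lm :: "(nat \<Rightarrow> nat) \<Rightarrow> nat \<Rightarrow> (freq \<Rightarrow> real) \<Rightarrow> freq \<Rightarrow> op" where
  "Lm n N Gm w = (case w of
      Wplus \<Rightarrow> smult (complex_of_real (sqrt (real (n 1) * Gm Wplus))) (ketbra (phi n 1 0) (ket Plus))
    | W k \<Rightarrow> smult (complex_of_real (sqrt (Gm (W k)))) (Zop n k)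
    | Wminus \<Rightarrow> smult (complex_of_real (sqrt (Gm Wminus))) (ketbra (ket Minus) (phi n N 0)))"

definition Lp :: "(nat \<Rightarrow> nat) \<Rightarrow> nat \<Rightarrow> (freq \<Rightarrow> real) \<Rightarrow> freq \<Rightarrow> op" where
  "Lp n N Gp w = (case w of
      Wplus \<Rightarrow> smult (complex_of_real (sqrt (real (n 1) * Gp Wplus))) (ketbra (ket Plus) (phi n 1 0))
    | W k \<Rightarrow> smult (complex_of_real (sqrt (Gp (W k)))) (adj (Zop n k))
    | Wminus \<Rightarrow> (\<lambda>i j. 0))"

definition Heff :: "nat \<Rightarrow> (nat \<Rightarrow> nat) \<Rightarrow> (freq \<Rightarrow> real) \<Rightarrow> (freq \<Rightarrow> real) \<Rightarrow> op" where
  "Heff N n gm gp =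
      smult (of_real (real (n 1) * gm Wplus)) (ketbra (ket Plus) (ket Plus))
    - smult (of_real (real (n 1) * gp Wplus)) (ketbra (phi n 1 0) (phi n 1 0))
    + smult (of_real (gm Wminus)) (ketbra (phi n N 0) (phi n N 0))
    - smult (of_real (gp Wminus)) (ketbra (ket Minus) (ket Minus))
    + (\<Sum>k\<in>{1..N-1}. smult (of_real (gm (W k))) (mmult N n (adj (Zop n k)) (Zop n k))
                     - smult (of_real (gp (W k))) (Proj n (Suc k)))"

definition freqs :: "nat \<Rightarrow> freq set" where
  "freqs N = {Wplus, Wminus} \<union> W ` {1..N-1}"

definition lindblad :: "nat \<Rightarrow> (nat \<Rightarrow> nat) \<Rightarrow> (freq \<Rightarrow> real) \<Rightarrow> (freq \<Rightarrow> real)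
     \<Rightarrow> (freq \<Rightarrow> real) \<Rightarrow> (freq \<Rightarrow> real) \<Rightarrow> op \<Rightarrow> op" where
  "lindblad N n Gm Gp gm gp \<rho> =
      smult (- \<i>) (mmult N n (Heff N n gm gp) \<rho> - mmult N n \<rho> (Heff N n gm gp))
    + (\<Sum>w\<in>freqs N. dissip N n (Lm n N Gm w) \<rho> + dissip N n (Lp n N Gp w) \<rho>)"

definition supported_Omega :: "nat \<Rightarrow> (nat \<Rightarrow> nat) \<Rightarrow> op \<Rightarrow> bool" where
  "supported_Omega N n A \<longleftrightarrow>
     (\<forall>x. \<forall>v\<in>{ket Minus, ket Plus, phi n 1 0, phi n N 0}. inner_H N n v (app N n A x) = 0)"

definition beta :: "(freq \<Rightarrow> real) \<Rightarrow> (freq \<Rightarrow> real) \<Rightarrow> nat \<Rightarrow> real" where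
  "beta Gm Gp k = ln (Gm (W k) / Gp (W k))"

end

theory Submission
  imports Defs
begin


lemma sum_fun_apply: "(sum f S) i = sum (\<lambda>k. f k i) S"
  by (induction S rule: infinite_finite_induct) auto

lemma finite_basis[simp]: "finite (basis N n)"
proof -
  have "{Site k a | k a. 1 \<le> k \<and> k \<le> N \<and> a < n k} \<subseteq> (\<lambda>(k,a). Site k a) ` ({..N} \<times> {..<Max (n ` {..N})+1})"
  proof
    fix x assume "x \<in> {Site k a | k a. 1 \<le> k \<and> k \<le> N \<and> a < n k}"
    then obtain k a where x: "x = Site k a" "k \<le> N" "a < n k" by auto
    have M: "n k \<le> Max (n ` {..N})" using x by (intro Max_ge) auto
    have "a < Max (n ` {..N})+1" using M x(3) by linarith
    then have "(k,a) \<in> {..N} \<times> {..<Max (n ` {..N})+1}" using x(2) by simp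
    then show "x \<in> (\<lambda>(k,a). Site k a) ` ({..N} \<times> {..<Max (n ` {..N})+1})" using x by force
  qed
  then show ?thesis unfolding basis_def by (meson finite_Un finite_SigmaI finite_atMost finite_imageI finite_insert finite_lessThan finite.emptyI finite_subset)
qed

lemma mmult_assoc: "mmult N n (mmult N n A B) C = mmult N n A (mmult N n B C)"
  unfolding mmult_def
  by (auto simp: fun_eq_iff sum_distrib_left sum_distrib_right mult.assoc intro: sum.swap)

lemma mmult_add_left: "mmult N n (A + B) C = mmult N n A C + mmult N n B C"
  unfolding mmult_def by (auto simp: fun_eq_iff distrib_right sum.distrib)
lemma mmult_add_right: "mmult N n C (A + B) = mmult N n C A + mmult N n C B"
  unfolding mmult_def by (auto simp: fun_eq_iff distrib_left sum.distrib)
lemma mmult_diff_left: "mmult N n (A - B) C = mmult N n A C - mmult N n B C"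
  unfolding mmult_def by (auto simp: fun_eq_iff left_diff_distrib sum_subtractf)
lemma mmult_diff_right: "mmult N n C (A - B) = mmult N n C A - mmult N n C B"
  unfolding mmult_def by (auto simp: fun_eq_iff right_diff_distrib sum_subtractf)
lemma mmult_smult_left: "mmult N n (smult c A) C = smult c (mmult N n A C)"
  unfolding mmult_def smult_def by (auto simp: fun_eq_iff sum_distrib_left mult.assoc)
lemma mmult_smult_right: "mmult N n C (smult c A) = smult c (mmult N n C A)"
  unfolding mmult_def smult_def by (auto simp: fun_eq_iff sum_distrib_left mult.left_commute)
lemma mmult_zero_left[simp]: "mmult N n 0 C = 0" and mmult_zero_right[simp]: "mmult N n C 0 = 0"
  unfolding mmult_def by (auto simp: fun_eq_iff)
lemma mmult_zero_left'[simp]: "mmult N n (\<lambda>i j. 0) C = 0" and mmult_zero_right'[simp]: "mmult N n C (\<lambda>i j. 0) = 0"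
  unfolding mmult_def by (auto simp: fun_eq_iff)
lemma mmult_sum_left: "mmult N n (sum f S) C = sum (\<lambda>k. mmult N n (f k) C) S"
  unfolding mmult_def by (auto simp: fun_eq_iff sum_fun_apply sum_distrib_right intro: sum.swap)
lemma mmult_sum_right: "mmult N n C (sum f S) = sum (\<lambda>k. mmult N n C (f k)) S"
  unfolding mmult_def by (auto simp: fun_eq_iff sum_fun_apply sum_distrib_left intro: sum.swap)

lemma adj_adj[simp]: "adj (adj A) = A" unfolding adj_def by auto
lemma adj_mmult: "adj (mmult N n A B) = mmult N n (adj B) (adj A)"
  unfolding adj_def mmult_def by (auto simp: fun_eq_iff mult.commute)
lemma adj_smult: "adj (smult c A) = smult (cnj c) (adj A)"
  unfolding adj_def smult_def by auto
lemma adj_ketbra: "adj (ketbra x y) = ketbra y x"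
  unfolding adj_def ketbra_def by (auto simp: fun_eq_iff mult.commute)
lemma smult_smult: "smult a (smult b A) = smult (a*b) A" unfolding smult_def by (auto simp: mult.assoc)



lemma root_sum:
  fixes m b b' :: nat assumes "b < m" "b' < m"
  shows "(\<Sum>a<m. cis (2*pi/m) ^ (b*a) * cnj (cis (2*pi/m) ^ (b'*a))) = (if b = b' then of_nat m else 0)"
proof -
  define w where "w = cis (2*pi*(real b - real b')/m)"
  have t: "cis (2*pi/m) ^ (b*a) * cnj (cis (2*pi/m) ^ (b'*a)) = w ^ a" for a
  proof -
    have "cis (2*pi/m) ^ (b*a) * cnj (cis (2*pi/m) ^ (b'*a))
        = cis (real (b*a) * (2*pi/m) + - (real (b'*a) * (2*pi/m)))"
      by (simp add: DeMoivre cis_cnj cis_mult)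
    also have "\<dots> = cis (real a * (2*pi*(real b - real b')/m))"
      by (rule arg_cong[where f=cis]) (simp add: field_simps, simp add: diff_divide_distrib)
    finally show ?thesis by (simp add: w_def DeMoivre)
  qed
  have S: "(\<Sum>a<m. cis (2*pi/m) ^ (b*a) * cnj (cis (2*pi/m) ^ (b'*a))) = (\<Sum>a<m. w ^ a)"
    by (simp only: t)
  have "(\<Sum>a<m. w ^ a) = (if b = b' then of_nat m else 0)"
  proof (cases "b = b'")
    case True
    then have "w = 1" by (simp add: w_def)
    then show ?thesis using True by simp
  next
    case False
    have wm: "w ^ m = 1"
    proof -
      have "w ^ m = cis (2*pi*(of_int (int b - int b')))"
      proof -
        have m0: "real m > 0" using assms by simp
        have "real m * (2*pi*(real b - real b')/m) = 2*pi*(of_int (int b - int b'))"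
          using m0 by (simp add: field_simps)
        then show ?thesis by (simp add: w_def DeMoivre)
      qed
      also have "\<dots> = 1" by (rule cis_multiple_2pi) simp
      finally show ?thesis .
    qed
    have w1: "w \<noteq> 1"
    proof
      assume "w = 1"
      then have "cos (2*pi*(real b - real b')/m) = 1" unfolding w_def
        by (metis Re_complex_of_real cis.sel(1) one_complex.simps(1))
      then obtain z :: int where z: "2*pi*(real b - real b')/m = z*2*pi"
        by (auto simp: cos_one_2pi_int)
      have "m > 0" using assms by auto
      have "pi * (2*((real b - real b')/m)) = pi * (2*z)" using z by (simp add: algebra_simps)
      then have "2*((real b - real b')/m) = 2*z" using mult_left_cancel[OF pi_neq_zero] by blast
      then have "(real b - real b')/m = z" by linarith
      then have "real b - real b' = z * m" using \<open>m > 0\<close> by (simp add: field_simps)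
      then have "int b - int b' = z * int m" by (metis of_int_eq_iff of_int_mult of_int_diff of_int_of_nat_eq)
      moreover have "\<bar>int b - int b'\<bar> < int m" using assms by auto
      moreover have "z \<noteq> 0 \<Longrightarrow> \<bar>z * int m\<bar> \<ge> int m"
      proof -
        assume "z \<noteq> 0"
        then have "\<bar>z\<bar> \<ge> 1" by auto
        then have "\<bar>z\<bar> * int m \<ge> 1 * int m" by (intro mult_right_mono) auto
        then show ?thesis by (simp add: abs_mult)
      qed
      ultimately show False using False by fastforce
    qed
    show ?thesis using False by (simp add: geometric_sum[OF w1] wm)
  qed
  then show ?thesis using S by simp
qed



definition inE :: "(nat \<Rightarrow> nat) \<Rightarrow> nat \<Rightarrow> idx \<Rightarrow> bool" where
  "inE n k i \<longleftrightarrow> (\<exists>a<n k. i = Site k a)"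

fun sidx :: "idx \<Rightarrow> nat" where
  "sidx (Site k a) = a" | "sidx Minus = 0" | "sidx Plus = 0"

lemma inE_simps[simp]: "inE n k (Site k' a) \<longleftrightarrow> k' = k \<and> a < n k"
  "\<not> inE n k Minus" "\<not> inE n k Plus"
  unfolding inE_def by auto

lemma inE_basis: "1 \<le> k \<Longrightarrow> k \<le> N \<Longrightarrow> inE n k i \<Longrightarrow> i \<in> basis N n"
  unfolding inE_def basis_def by auto

lemma inE_disj: "inE n k i \<Longrightarrow> inE n k' i \<Longrightarrow> k = k'"
  unfolding inE_def by auto

lemma Proj_entry: "Proj n k i j = (if i = j \<and> inE n k i then 1 else 0)"
proof (cases "inE n k i")
  case True
  then obtain a0 where a0: "a0 < n k" "i = Site k a0" unfolding inE_def by auto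
  have "Proj n k i j = (\<Sum>a<n k. if a = a0 then (if j = i then 1 else 0) else 0)"
    unfolding Proj_def ketbra_def ket_def using a0 by (intro sum.cong) auto
  also have "\<dots> = (if j = i then 1 else 0)" using a0 by simp
  finally show ?thesis using True by auto
next
  case False
  then have "\<And>a. a < n k \<Longrightarrow> i \<noteq> Site k a" unfolding inE_def by auto
  then have "Proj n k i j = 0"
    unfolding Proj_def ketbra_def ket_def by (intro sum.neutral) auto
  then show ?thesis using False by auto
qed

lemma mmult_Proj_left: "1 \<le> k \<Longrightarrow> k \<le> N \<Longrightarrow>
   mmult N n (Proj n k) A = (\<lambda>i j. if inE n k i then A i j else 0)"
proof (intro ext)
  fix i j assume k: "1 \<le> k" "k \<le> N"
  have "mmult N n (Proj n k) A i j = (\<Sum>l\<in>basis N n. if l = i then (if inE n k i then A i j else 0) else 0)"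
    unfolding mmult_def Proj_entry by (intro sum.cong) auto
  also have "\<dots> = (if inE n k i then A i j else 0)" using inE_basis[OF k] by auto
  finally show "mmult N n (Proj n k) A i j = (if inE n k i then A i j else 0)" .
qed

lemma mmult_Proj_right: "1 \<le> k \<Longrightarrow> k \<le> N \<Longrightarrow>
   mmult N n A (Proj n k) = (\<lambda>i j. if inE n k j then A i j else 0)"
proof (intro ext)
  fix i j assume k: "1 \<le> k" "k \<le> N"
  have "mmult N n A (Proj n k) i j = (\<Sum>l\<in>basis N n. if l = j then (if inE n k j then A i j else 0) else 0)"
    unfolding mmult_def Proj_entry by (intro sum.cong) auto
  also have "\<dots> = (if inE n k j then A i j else 0)" using inE_basis[OF k] by auto
  finally show "mmult N n A (Proj n k) i j = (if inE n k j then A i j else 0)" .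
qed

definition cZ :: "(nat \<Rightarrow> nat) \<Rightarrow> nat \<Rightarrow> complex" where
  "cZ n k = 1 / complex_of_real (sqrt (real (n k)))"

lemma Zop_entry: "Zop n k i j = (if inE n (Suc k) i \<and> inE n k j then cZ n k * zeta n k ^ (sidx i * sidx j) else 0)"
proof (cases "inE n (Suc k) i \<and> inE n k j")
  case True
  then obtain b0 a0 where ab: "b0 < n (Suc k)" "i = Site (Suc k) b0" "a0 < n k" "j = Site k a0"
    unfolding inE_def by auto
  have "Zop n k i j = (\<Sum>b<n (Suc k). \<Sum>a<n k. if b = b0 then (if a = a0 then cZ n k * zeta n k ^ (b0 * a0) else 0) else 0)"
    unfolding Zop_def ketbra_def ket_def cZ_def using ab by (intro sum.cong refl) auto
  also have "\<dots> = (\<Sum>b<n (Suc k). if b = b0 then (\<Sum>a<n k. if a = a0 then cZ n k * zeta n k ^ (b0 * a0) else 0) else 0)"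
    by (intro sum.cong refl) auto
  also have "\<dots> = cZ n k * zeta n k ^ (b0 * a0)" using ab by simp
  finally show ?thesis using True ab by simp
next
  case False
  have "Zop n k i j = 0"
    unfolding Zop_def ketbra_def ket_def using False
    by (intro sum.neutral ballI) (auto simp: inE_def)
  then show ?thesis using False by auto
qed

lemma sum_basis_E: assumes "1 \<le> k" "k \<le> N" "\<And>l. l \<in> basis N n \<Longrightarrow> \<not> inE n k l \<Longrightarrow> f l = 0"
  shows "sum f (basis N n) = (\<Sum>a<n k. f (Site k a))"
proof -
  have sub: "Site k ` {..<n k} \<subseteq> basis N n" using assms(1,2) unfolding basis_def by auto
  have "sum f (basis N n) = sum f (Site k ` {..<n k})"
    by (rule sum.mono_neutral_right[OF finite_basis sub]) (use assms(3) in \<open>auto simp: inE_def\<close>)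
  also have "\<dots> = (\<Sum>a<n k. f (Site k a))" by (subst sum.reindex) (auto simp: inj_on_def)
  finally show ?thesis .
qed

lemma Proj_Proj: "1 \<le> j \<Longrightarrow> j \<le> N \<Longrightarrow> mmult N n (Proj n j) (Proj n l) = (if j = l then Proj n j else 0)"
  by (auto simp: mmult_Proj_left Proj_entry fun_eq_iff dest: inE_disj)

lemma adj_Proj: "adj (Proj n j) = Proj n j"
  by (auto simp: adj_def Proj_entry fun_eq_iff)

lemma Proj_Z: "1 \<le> j \<Longrightarrow> j \<le> N \<Longrightarrow> mmult N n (Proj n j) (Zop n k) = (if j = Suc k then Zop n k else 0)"
  by (auto simp: mmult_Proj_left Zop_entry fun_eq_iff dest: inE_disj)

lemma Z_Proj: "1 \<le> j \<Longrightarrow> j \<le> N \<Longrightarrow> mmult N n (Zop n k) (Proj n j) = (if j = k then Zop n k else 0)"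
  by (auto simp: mmult_Proj_right Zop_entry fun_eq_iff dest: inE_disj)

lemma Proj_Zadj: "1 \<le> j \<Longrightarrow> j \<le> N \<Longrightarrow> mmult N n (Proj n j) (adj (Zop n k)) = (if j = k then adj (Zop n k) else 0)"
  by (auto simp: mmult_Proj_left adj_def Zop_entry fun_eq_iff dest: inE_disj)

lemma Zadj_Proj: "1 \<le> j \<Longrightarrow> j \<le> N \<Longrightarrow> mmult N n (adj (Zop n k)) (Proj n j) = (if j = Suc k then adj (Zop n k) else 0)"
  by (auto simp: mmult_Proj_right adj_def Zop_entry fun_eq_iff dest: inE_disj)

lemma ZZadj: assumes "1 \<le> k" "k < N" "n (Suc k) \<le> n k"
  shows "mmult N n (Zop n k) (adj (Zop n k)) = Proj n (Suc k)"
proof (intro ext)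
  fix i j
  have "mmult N n (Zop n k) (adj (Zop n k)) i j = (\<Sum>a<n k. Zop n k i (Site k a) * cnj (Zop n k j (Site k a)))"
    unfolding mmult_def adj_def using assms by (intro sum_basis_E) (auto simp: Zop_entry)
  also have "\<dots> = Proj n (Suc k) i j"
  proof (cases "inE n (Suc k) i \<and> inE n (Suc k) j")
    case True
    then obtain b b' where bb: "b < n (Suc k)" "i = Site (Suc k) b" "b' < n (Suc k)" "j = Site (Suc k) b'"
      unfolding inE_def by auto
    have c: "cZ n k * cnj (cZ n k) = 1 / of_nat (n k)"
    proof -
      have "complex_of_real (sqrt (real (n k))) * complex_of_real (sqrt (real (n k))) = of_nat (n k)"
        by (simp flip: of_real_mult)
      then show ?thesis unfolding cZ_def by (simp add: field_simps)
    qed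
    have "(\<Sum>a<n k. Zop n k i (Site k a) * cnj (Zop n k j (Site k a)))
        = (\<Sum>a<n k. (cZ n k * cnj (cZ n k)) * (cis (2*pi/n k) ^ (b*a) * cnj (cis (2*pi/n k) ^ (b'*a))))"
      using bb by (intro sum.cong) (auto simp: Zop_entry zeta_def)
    also have "\<dots> = (cZ n k * cnj (cZ n k)) * (if b = b' then of_nat (n k) else 0)"
      by (subst sum_distrib_left[symmetric], subst root_sum) (use bb assms in auto)
    also have "\<dots> = Proj n (Suc k) i j"
      using bb assms c by (auto simp: Proj_entry)
    finally show ?thesis .
  next
    case False
    then show ?thesis by (auto simp: Zop_entry Proj_entry)
  qed
  finally show "mmult N n (Zop n k) (adj (Zop n k)) i j = Proj n (Suc k) i j" .
qed



lemma sum_two: assumes "finite B" "i \<in> B" "j \<in> B" "i \<noteq> j" "\<And>p. p \<in> B \<Longrightarrow> p \<noteq> i \<Longrightarrow> p \<noteq> j \<Longrightarrow> f p = 0"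
  shows "sum f B = f i + f j"
proof -
  have "sum f B = sum f {i, j}"
    by (rule sum.mono_neutral_right) (use assms in auto)
  then show ?thesis using assms(4) by simp
qed

lemma quad_two:
  assumes op: "is_op N n A" and ij: "i \<in> basis N n" "j \<in> basis N n" "i \<noteq> j"
  shows "inner_H N n (\<lambda>p. if p = i then u else if p = j then v else 0)
            (app N n A (\<lambda>p. if p = i then u else if p = j then v else 0))
       = cnj u * (A i i * u + A i j * v) + cnj v * (A j i * u + A j j * v)"
proof -
  let ?x = "\<lambda>p. if p = i then u else if p = j then v else 0"
  have app: "app N n A ?x r = A r i * u + A r j * v" for r
    unfolding app_def by (subst sum_two[OF finite_basis ij]) (use ij in auto)
  show ?thesis unfolding inner_H_def app
    by (subst sum_two[OF finite_basis ij]) (use ij in auto)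
qed

lemma state_herm: assumes st: "is_state N n A" shows "A j i = cnj (A i j)"
proof -
  have op: "is_op N n A" and pos: "\<And>x. Im (inner_H N n x (app N n A x)) = 0"
    using st unfolding is_state_def by auto
  show ?thesis
  proof (cases "i \<in> basis N n \<and> j \<in> basis N n")
    case False
    then show ?thesis using op unfolding is_op_def by auto
  next
    case True
    show ?thesis
    proof (cases "i = j")
      case True
      obtain k where k: "k \<in> basis N n" "k \<noteq> i" unfolding basis_def by auto
      from quad_two[OF op _ k(1) k(2)[symmetric], of 1 0] pos[of "\<lambda>p. if p = i then 1 else if p = k then 0 else 0"]
      have "Im (A i i) = 0" using \<open>i \<in> basis N n \<and> j \<in> basis N n\<close> by simp
      then show ?thesis using True by (simp add: complex_eq_iff)
    next
      case False
      have ii: "Im (A i i) = 0" and jj: "Im (A j j) = 0"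
      proof -
        obtain k where k: "k \<in> basis N n" "k \<noteq> i" unfolding basis_def by auto
        from quad_two[OF op _ k(1) k(2)[symmetric], of 1 0] pos[of "\<lambda>p. if p = i then 1 else if p = k then 0 else 0"]
        show "Im (A i i) = 0" using \<open>i \<in> basis N n \<and> j \<in> basis N n\<close> by simp
      next
        obtain k where k: "k \<in> basis N n" "k \<noteq> j" unfolding basis_def by auto
        from quad_two[OF op _ k(1) k(2)[symmetric], of 1 0] pos[of "\<lambda>p. if p = j then 1 else if p = k then 0 else 0"]
        show "Im (A j j) = 0" using \<open>i \<in> basis N n \<and> j \<in> basis N n\<close> by simp
      qed
      from quad_two[OF op _ _ False, of 1 1] pos[of "\<lambda>p. if p = i then 1 else if p = j then 1 else 0"]
      have 1: "Im (A i j) + Im (A j i) = 0" using True ii jj by simp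
      have "inner_H N n (\<lambda>p. if p = i then 1 else if p = j then \<i> else 0)
            (app N n A (\<lambda>p. if p = i then 1 else if p = j then \<i> else 0))
         = cnj 1 * (A i i * 1 + A i j * \<i>) + cnj \<i> * (A j i * 1 + A j j * \<i>)"
        by (rule quad_two[OF op _ _ False]) (use True in auto)
      then have "Im (inner_H N n (\<lambda>p. if p = i then 1 else if p = j then \<i> else 0)
            (app N n A (\<lambda>p. if p = i then 1 else if p = j then \<i> else 0)))
          = Im (A i i) + Re (A i j) - Re (A j i) + Im (A j j)" by simp
      then have 2: "Re (A i j) - Re (A j i) = 0" using pos ii jj by simp
      show ?thesis using 1 2 by (simp add: complex_eq_iff)
    qed
  qed
qed

lemma state_adj: assumes "is_state N n A" shows "adj A = A"
proof (intro ext)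
  fix i j show "adj A i j = A i j" unfolding adj_def using state_herm[OF assms, of j i] by simp
qed

definition Vset :: "nat \<Rightarrow> (nat \<Rightarrow> nat) \<Rightarrow> vec set" where
  "Vset N n = {ket Minus, ket Plus, phi n 1 0, phi n N 0}"

lemma app_ket: "is_op N n A \<Longrightarrow> app N n A (ket j) i = A i j"
proof -
  assume op: "is_op N n A"
  show ?thesis
  proof (cases "j \<in> basis N n")
    case True
    have "app N n A (ket j) i = (\<Sum>l\<in>basis N n. if l = j then A i j else 0)"
      unfolding app_def ket_def by (intro sum.cong) auto
    then show ?thesis using True by simp
  next
    case False
    then show ?thesis using op unfolding app_def ket_def is_op_def by (auto intro!: sum.neutral)
  qed
qed

lemma row_kill: assumes st: "is_state N n A" "supported_Omega N n A" "v \<in> Vset N n"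
  shows "(\<Sum>p\<in>basis N n. cnj (v p) * A p j) = 0"
proof -
  have op: "is_op N n A" using st unfolding is_state_def by auto
  have "inner_H N n v (app N n A (ket j)) = 0" using st unfolding supported_Omega_def Vset_def by auto
  then show ?thesis unfolding inner_H_def app_ket[OF op] .
qed

lemma col_kill: assumes st: "is_state N n A" "supported_Omega N n A" "v \<in> Vset N n"
  shows "(\<Sum>p\<in>basis N n. A i p * v p) = 0"
proof -
  have "(\<Sum>p\<in>basis N n. A i p * v p) = cnj (\<Sum>p\<in>basis N n. cnj (v p) * A p i)"
    by (simp add: state_herm[OF st(1), of i] mult.commute)
  then show ?thesis using row_kill[OF st] by simp
qed

lemma ketbra_left_kill: assumes st: "is_state N n A" "supported_Omega N n A" "v \<in> Vset N n"
  shows "mmult N n (ketbra x v) A = 0"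
proof -
  have "mmult N n (ketbra x v) A i j = x i * (\<Sum>p\<in>basis N n. cnj (v p) * A p j)" for i j
    unfolding mmult_def ketbra_def by (simp add: sum_distrib_left mult.assoc)
  then show ?thesis using row_kill[OF st] by (auto simp: fun_eq_iff)
qed

lemma ketbra_right_kill: assumes st: "is_state N n A" "supported_Omega N n A" "v \<in> Vset N n"
  shows "mmult N n A (ketbra v x) = 0"
proof -
  have "mmult N n A (ketbra v x) i j = (\<Sum>p\<in>basis N n. A i p * v p) * cnj (x j)" for i j
    unfolding mmult_def ketbra_def by (simp add: sum_distrib_right mult.assoc)
  then show ?thesis using col_kill[OF st] by (auto simp: fun_eq_iff)
qed

lemma dissip_kill: assumes "mmult N n L A = 0" "mmult N n A (adj L) = 0"
  shows "dissip N n L A = 0"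
proof -
  have 1: "mmult N n (mmult N n (adj L) L) A = 0" by (simp add: mmult_assoc assms)
  have 2: "mmult N n A (mmult N n (adj L) L) = 0" by (simp add: mmult_assoc[symmetric] assms)
  show ?thesis unfolding dissip_def 1 2 assms by (simp add: smult_def fun_eq_iff)
qed



lemma dissip_smult: "dissip N n (smult c L) A = smult (c * cnj c) (dissip N n L A)"
  unfolding dissip_def adj_smult mmult_smult_left mmult_smult_right smult_smult
  by (simp add: smult_def fun_eq_iff algebra_simps)

lemma dissip_ketbra_kill: assumes st: "is_state N n A" "supported_Omega N n A" "v \<in> Vset N n"
  shows "dissip N n (smult c (ketbra x v)) A = 0"
  unfolding dissip_smult
  by (simp add: dissip_kill ketbra_left_kill[OF st] ketbra_right_kill[OF st] adj_ketbra smult_def zero_fun_def)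



lemma smult_zero[simp]: "smult c 0 = 0" unfolding smult_def by (simp add: zero_fun_def)
lemma smult_zero'[simp]: "smult 0 A = 0" unfolding smult_def by (simp add: zero_fun_def)
lemma smult_one[simp]: "smult 1 A = A" unfolding smult_def by simp
lemma smult_add: "smult c (A + B) = smult c A + smult c B" unfolding smult_def by (auto simp: fun_eq_iff algebra_simps)
lemma smult_diff: "smult c (A - B) = smult c A - smult c B" unfolding smult_def by (auto simp: fun_eq_iff algebra_simps)
lemma smult_add_left: "smult (a + b) A = smult a A + smult b A" unfolding smult_def by (auto simp: fun_eq_iff algebra_simps)

locale chain =
  fixes N :: nat and n :: "nat \<Rightarrow> nat"
  assumes N2: "N \<ge> 2"
    and npos: "\<And>k. 1 \<le> k \<Longrightarrow> k \<le> N \<Longrightarrow> n k \<ge> 1"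
    and nmono: "\<And>k. 1 \<le> k \<Longrightarrow> k < N \<Longrightarrow> n (Suc k) \<le> n k"
begin

abbreviation MM where "MM \<equiv> mmult N n"
abbreviation QQ where "QQ k \<equiv> mmult N n (adj (Zop n k)) (Zop n k)"

lemma ZZa: "1 \<le> k \<Longrightarrow> k < N \<Longrightarrow> MM (Zop n k) (adj (Zop n k)) = Proj n (Suc k)"
  using ZZadj nmono by blast

lemma PQ: "1 \<le> j \<Longrightarrow> j \<le> N \<Longrightarrow> MM (Proj n j) (QQ k) = (if j = k then QQ k else 0)"
  by (simp add: mmult_assoc[symmetric] Proj_Zadj)

lemma QP: "1 \<le> j \<Longrightarrow> j \<le> N \<Longrightarrow> MM (QQ k) (Proj n j) = (if j = k then QQ k else 0)"
  by (simp add: mmult_assoc Z_Proj)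

lemma ZQ: "1 \<le> k \<Longrightarrow> k < N \<Longrightarrow> MM (Zop n k) (QQ k) = Zop n k"
  by (simp add: mmult_assoc[symmetric] ZZa Proj_Z)

lemma QZa: "1 \<le> k \<Longrightarrow> k < N \<Longrightarrow> MM (QQ k) (adj (Zop n k)) = adj (Zop n k)"
  by (simp add: mmult_assoc ZZa Zadj_Proj)

lemma QQ_idem: "1 \<le> k \<Longrightarrow> k < N \<Longrightarrow> MM (QQ k) (QQ k) = QQ k"
  by (simp add: mmult_assoc[symmetric] QZa)

lemma adj_QQ: "adj (QQ k) = QQ k"
  by (simp add: adj_mmult)

lemma PP: "1 \<le> j \<Longrightarrow> j \<le> N \<Longrightarrow> MM (Proj n j) (Proj n l) = (if j = l then Proj n j else 0)"
  by (rule Proj_Proj)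

end



lemma dissip_zero: "dissip N n (\<lambda>i j. 0) R = 0"
  by (simp add: dissip_def adj_def smult_def zero_fun_def mmult_def)

lemma sqrt_cnj: "g > 0 \<Longrightarrow> complex_of_real (sqrt g) * cnj (complex_of_real (sqrt g)) = complex_of_real g"
  by (simp flip: of_real_mult)

locale inv = chain +
  fixes Gm Gp gm gp :: "freq \<Rightarrow> real" and R :: op
  assumes Gmpos: "\<And>w. w \<in> freqs N \<Longrightarrow> Gm w > 0"
    and Gppos: "\<And>w. w \<in> freqs N \<Longrightarrow> Gp w > 0"
    and st: "is_state N n R"
    and lind: "lindblad N n Gm Gp gm gp R = (\<lambda>i j. 0)"
    and supp: "supported_Omega N n R"
begin

lemma Wfreq: "k \<in> {1..N-1} \<Longrightarrow> W k \<in> freqs N" unfolding freqs_def by auto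

definition Hs where
  "Hs = (\<Sum>k\<in>{1..N-1}. smult (of_real (gm (W k))) (QQ k) - smult (of_real (gp (W k))) (Proj n (Suc k)))"

lemma lk: "v \<in> Vset N n \<Longrightarrow> MM (ketbra x v) R = 0" by (rule ketbra_left_kill[OF st supp])
lemma rk: "v \<in> Vset N n \<Longrightarrow> MM R (ketbra v x) = 0" by (rule ketbra_right_kill[OF st supp])
lemma V1: "ket Plus \<in> Vset N n" "ket Minus \<in> Vset N n" "phi n 1 0 \<in> Vset N n" "phi n N 0 \<in> Vset N n"
  "phi n (Suc 0) 0 \<in> Vset N n"
  unfolding Vset_def by auto

lemma Heff_left: "MM (Heff N n gm gp) R = MM Hs R"
  unfolding Heff_def Hs_def
  by (simp add: mmult_add_left mmult_diff_left mmult_smult_left lk V1)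

lemma Heff_right: "MM R (Heff N n gm gp) = MM R Hs"
  unfolding Heff_def Hs_def
  by (simp add: mmult_add_right mmult_diff_right mmult_smult_right rk V1)

lemma freqs_sum: "(\<Sum>w\<in>freqs N. dissip N n (Lm n N Gm w) R + dissip N n (Lp n N Gp w) R)
   = (\<Sum>k\<in>{1..N-1}. dissip N n (Lm n N Gm (W k)) R + dissip N n (Lp n N Gp (W k)) R)"
proof -
  have fr: "freqs N = insert Wplus (insert Wminus (W ` {1..N-1}))" unfolding freqs_def by auto
  have z1: "dissip N n (Lm n N Gm Wplus) R + dissip N n (Lp n N Gp Wplus) R = 0"
    unfolding Lm_def Lp_def using V1
    by (simp add: dissip_ketbra_kill[OF st supp])
  have z2: "dissip N n (Lm n N Gm Wminus) R + dissip N n (Lp n N Gp Wminus) R = 0"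
    unfolding Lm_def Lp_def using V1
    by (simp add: dissip_ketbra_kill[OF st supp] dissip_zero)
  define f where "f w = dissip N n (Lm n N Gm w) R + dissip N n (Lp n N Gp w) R" for w
  have "sum f (insert Wplus (insert Wminus (W ` {1..N-1}))) = f Wplus + (f Wminus + sum f (W ` {1..N-1}))"
    by (subst sum.insert; auto)+
  also have "\<dots> = sum f (W ` {1..N-1})" using z1 z2 unfolding f_def by simp
  also have "\<dots> = (\<Sum>k\<in>{1..N-1}. f (W k))" by (subst sum.reindex) (auto simp: inj_on_def)
  finally show ?thesis unfolding fr f_def .
qed

definition alpha where "alpha k = complex_of_real (Gm (W k) / 2) + \<i> * complex_of_real (gm (W k))"
definition bet where "bet k = complex_of_real (Gp (W k) / 2) - \<i> * complex_of_real (gp (W k))"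
definition hk where "hk k = smult (of_real (gm (W k))) (QQ k) - smult (of_real (gp (W k))) (Proj n (Suc k))"
definition gk where "gk k = smult (alpha k) (QQ k) + smult (bet k) (Proj n (Suc k))"
definition gk' where "gk' k = smult (cnj (alpha k)) (QQ k) + smult (cnj (bet k)) (Proj n (Suc k))"
definition jk where "jk k = smult (of_real (Gm (W k))) (MM (MM (Zop n k) R) (adj (Zop n k)))
    + smult (of_real (Gp (W k))) (MM (MM (adj (Zop n k)) R) (Zop n k))"
definition Gop where "Gop = (\<Sum>k\<in>{1..N-1}. gk k)"
definition Gop' where "Gop' = (\<Sum>k\<in>{1..N-1}. gk' k)"
definition Jop where "Jop = (\<Sum>k\<in>{1..N-1}. jk k)"

lemma per_k: assumes k: "k \<in> {1..N-1}"
  shows "smult (- \<i>) (MM (hk k) R - MM R (hk k)) + (dissip N n (Lm n N Gm (W k)) R + dissip N n (Lp n N Gp (W k)) R)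
     = jk k - (MM (gk k) R + MM R (gk' k))"
proof -
  have k1: "1 \<le> k" "k < N" using k N2 by auto
  have dm: "dissip N n (Lm n N Gm (W k)) R = smult (of_real (Gm (W k))) (dissip N n (Zop n k) R)"
    unfolding Lm_def using Gmpos[OF Wfreq[OF k]] by (simp add: dissip_smult flip: of_real_mult)
  have dp: "dissip N n (Lp n N Gp (W k)) R = smult (of_real (Gp (W k))) (dissip N n (adj (Zop n k)) R)"
    unfolding Lp_def using Gppos[OF Wfreq[OF k]] by (simp add: dissip_smult flip: of_real_mult)
  show ?thesis
    unfolding dm dp
    unfolding dissip_def adj_adj ZZa[OF k1] hk_def gk_def gk'_def jk_def
    apply (simp only: mmult_add_left mmult_add_right mmult_diff_left mmult_diff_right mmult_smult_left mmult_smult_right)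
    by (simp add: fun_eq_iff smult_def algebra_simps alpha_def bet_def)
qed

lemma lin1: "smult c (sum a S - sum b S) + sum d S = sum (\<lambda>k. smult c (a k - b k) + d k) S"
  by (simp add: fun_eq_iff smult_def sum_fun_apply sum.distrib right_diff_distrib sum_subtractf sum_distrib_left)

lemma lind_form: "lindblad N n Gm Gp gm gp R = Jop - (MM Gop R + MM R Gop')"
proof -
  have "lindblad N n Gm Gp gm gp R = smult (- \<i>) (MM Hs R - MM R Hs)
     + (\<Sum>k\<in>{1..N-1}. dissip N n (Lm n N Gm (W k)) R + dissip N n (Lp n N Gp (W k)) R)"
    unfolding lindblad_def Heff_left Heff_right freqs_sum ..
  also have "\<dots> = (\<Sum>k\<in>{1..N-1}. smult (- \<i>) (MM (hk k) R - MM R (hk k)) + (dissip N n (Lm n N Gm (W k)) R + dissip N n (Lp n N Gp (W k)) R))"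
    unfolding Hs_def mmult_sum_left mmult_sum_right hk_def[symmetric] by (rule lin1)
  also have "\<dots> = (\<Sum>k\<in>{1..N-1}. jk k - (MM (gk k) R + MM R (gk' k)))"
    by (rule sum.cong) (auto simp: per_k)
  also have "\<dots> = Jop - (MM Gop R + MM R Gop')"
    unfolding Jop_def Gop_def Gop'_def mmult_sum_left mmult_sum_right
    by (simp add: sum_subtractf sum.distrib)
  finally show ?thesis .
qed

end



lemma smult_if: "smult (if c then a else 0) X = (if c then smult a X else 0)" by auto

context inv begin

definition Aj where "Aj j = (if 1 \<le> j \<and> j < N then alpha j else 0)"
definition Bj where "Bj j = (if 2 \<le> j \<and> j \<le> N then bet (j - 1) else 0)"
definition Gj where "Gj j = smult (Aj j) (QQ j) + smult (Bj j) (Proj n j)"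
definition Gj' where "Gj' j = smult (cnj (Aj j)) (QQ j) + smult (cnj (Bj j)) (Proj n j)"
definition X where "X j l = MM (MM (Proj n j) R) (Proj n l)"
definition Inj where "Inj j = (if 2 \<le> j \<and> j \<le> N then smult (of_real (Gm (W (j-1)))) (MM (MM (Zop n (j-1)) R) (adj (Zop n (j-1)))) else 0)"
definition Outj where "Outj j = (if 1 \<le> j \<and> j < N then smult (of_real (Gp (W j))) (MM (MM (adj (Zop n j)) R) (Zop n j)) else 0)"

lemma sum_two_delta:
  assumes j: "1 \<le> j" "j \<le> N"
  shows "(\<Sum>k\<in>{1..N-1}. (if k = j then (a::op) else 0) + (if k = j - 1 then b else 0))
       = (if 1 \<le> j \<and> j < N then a else 0) + (if 2 \<le> j \<and> j \<le> N then b else 0)"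
proof -
  have 1: "(\<Sum>k\<in>{1..N-1}. if k = j then a else 0) = (if j \<in> {1..N-1} then a else 0)" by simp
  have 2: "(\<Sum>k\<in>{1..N-1}. if k = j - 1 then b else 0) = (if j - 1 \<in> {1..N-1} then b else 0)" by simp
  have 3: "j \<in> {1..N-1} \<longleftrightarrow> 1 \<le> j \<and> j < N" using j N2 by auto
  have 4: "j - 1 \<in> {1..N-1} \<longleftrightarrow> 2 \<le> j \<and> j \<le> N" using j N2 by auto
  show ?thesis unfolding sum.distrib 1 2 3 4 ..
qed

lemma PGop: assumes j: "1 \<le> j" "j \<le> N" shows "MM (Proj n j) Gop = Gj j"
proof -
  have "MM (Proj n j) Gop = (\<Sum>k\<in>{1..N-1}. (if k = j then smult (alpha j) (QQ j) else 0) + (if k = j - 1 then smult (bet (j-1)) (Proj n j) else 0))"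
    unfolding Gop_def gk_def mmult_sum_right
    by (intro sum.cong refl) (use j in \<open>auto simp: mmult_add_right mmult_smult_right PQ PP\<close>)
  then show ?thesis unfolding sum_two_delta[OF j] Gj_def Aj_def Bj_def smult_if by simp
qed

lemma GopP: assumes j: "1 \<le> j" "j \<le> N" shows "MM Gop (Proj n j) = Gj j"
proof -
  have "MM Gop (Proj n j) = (\<Sum>k\<in>{1..N-1}. (if k = j then smult (alpha j) (QQ j) else 0) + (if k = j - 1 then smult (bet (j-1)) (Proj n j) else 0))"
    unfolding Gop_def gk_def mmult_sum_left
    by (intro sum.cong refl) (use j in \<open>auto simp: mmult_add_left mmult_smult_left QP PP\<close>)
  then show ?thesis unfolding sum_two_delta[OF j] Gj_def Aj_def Bj_def smult_if by simp
qed

lemma Gop'P: assumes j: "1 \<le> j" "j \<le> N" shows "MM Gop' (Proj n j) = Gj' j"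
proof -
  have "MM Gop' (Proj n j) = (\<Sum>k\<in>{1..N-1}. (if k = j then smult (cnj (alpha j)) (QQ j) else 0) + (if k = j - 1 then smult (cnj (bet (j-1))) (Proj n j) else 0))"
    unfolding Gop'_def gk'_def mmult_sum_left
    by (intro sum.cong refl) (use j in \<open>auto simp: mmult_add_left mmult_smult_left QP PP\<close>)
  then show ?thesis unfolding sum_two_delta[OF j] Gj'_def Aj_def Bj_def smult_if by simp
qed

lemma GjP: assumes j: "1 \<le> j" "j \<le> N" shows "MM (Gj j) (Proj n j) = Gj j"
  unfolding Gj_def using j by (simp add: mmult_add_left mmult_smult_left QP PP)

lemma PGj': assumes j: "1 \<le> j" "j \<le> N" shows "MM (Proj n j) (Gj' j) = Gj' j"
  unfolding Gj'_def using j by (simp add: mmult_add_right mmult_smult_right PQ PP)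

lemma sandwich3: "MM (MM A (MM (MM B R) C)) D = MM (MM (MM A B) R) (MM C D)"
  by (simp add: mmult_assoc)

lemma PJopP: assumes j: "1 \<le> j" "j \<le> N" and l: "1 \<le> l" "l \<le> N"
  shows "MM (MM (Proj n j) Jop) (Proj n l) = (if j = l then Inj j + Outj j else 0)"
proof -
  have "MM (MM (Proj n j) Jop) (Proj n l) = (\<Sum>k\<in>{1..N-1}.
      (if k = j then (if j = l then smult (of_real (Gp (W j))) (MM (MM (adj (Zop n j)) R) (Zop n j)) else 0) else 0)
    + (if k = j - 1 then (if j = l then smult (of_real (Gm (W (j-1)))) (MM (MM (Zop n (j-1)) R) (adj (Zop n (j-1)))) else 0) else 0))"
    unfolding Jop_def jk_def mmult_sum_right mmult_sum_left
  proof (intro sum.cong refl)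
    fix k assume k: "k \<in> {1..N-1}"
    show "MM (MM (Proj n j) (smult (of_real (Gm (W k))) (MM (MM (Zop n k) R) (adj (Zop n k)))
            + smult (of_real (Gp (W k))) (MM (MM (adj (Zop n k)) R) (Zop n k)))) (Proj n l) =
      (if k = j then (if j = l then smult (of_real (Gp (W j))) (MM (MM (adj (Zop n j)) R) (Zop n j)) else 0) else 0)
    + (if k = j - 1 then (if j = l then smult (of_real (Gm (W (j-1)))) (MM (MM (Zop n (j-1)) R) (adj (Zop n (j-1)))) else 0) else 0)"
      unfolding mmult_add_right mmult_add_left mmult_smult_right mmult_smult_left sandwich3
      using j l k by (auto simp: Proj_Z Zadj_Proj Proj_Zadj Z_Proj)
  qed
  then show ?thesis unfolding sum_two_delta[OF j] using j l by (auto simp: Inj_def Outj_def)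
qed

lemma block_eq: assumes j: "1 \<le> j" "j \<le> N" and l: "1 \<le> l" "l \<le> N"
  shows "(if j = l then Inj j + Outj j else 0) = MM (Gj j) (X j l) + MM (X j l) (Gj' l)"
proof -
  have a: "MM (MM (Proj n j) (MM Gop R)) (Proj n l) = MM (Gj j) (X j l)"
  proof -
    have "MM (MM (Proj n j) (MM Gop R)) (Proj n l) = MM (MM (MM (Gj j) (Proj n j)) R) (Proj n l)"
      by (simp add: mmult_assoc[symmetric] PGop[OF j] GjP[OF j])
    then show ?thesis by (simp add: mmult_assoc X_def)
  qed
  have b: "MM (MM (Proj n j) (MM R Gop')) (Proj n l) = MM (X j l) (Gj' l)"
  proof -
    have "MM (MM (Proj n j) (MM R Gop')) (Proj n l) = MM (MM (Proj n j) R) (MM (Proj n l) (Gj' l))"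
      by (simp add: mmult_assoc Gop'P[OF l] PGj'[OF l])
    then show ?thesis by (simp add: mmult_assoc X_def)
  qed
  have "0 = MM (MM (Proj n j) (lindblad N n Gm Gp gm gp R)) (Proj n l)"
    unfolding lind by (simp add: zero_fun_def[symmetric])
  also have "\<dots> = (if j = l then Inj j + Outj j else 0) - (MM (Gj j) (X j l) + MM (X j l) (Gj' l))"
    unfolding lind_form mmult_diff_left mmult_diff_right mmult_add_left mmult_add_right PJopP[OF j l] a b ..
  finally show ?thesis by simp
qed

end



context inv begin

lemma X_entry: "1 \<le> j \<Longrightarrow> j \<le> N \<Longrightarrow> 1 \<le> l \<Longrightarrow> l \<le> N \<Longrightarrow>
  X j l i i' = (if inE n j i \<and> inE n l i' then R i i' else 0)"
  unfolding X_def by (simp add: mmult_Proj_left mmult_Proj_right)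

lemma PX: "1 \<le> j \<Longrightarrow> j \<le> N \<Longrightarrow> MM (Proj n j) (X j l) = X j l"
  unfolding X_def by (simp add: mmult_assoc[symmetric] PP)

lemma XP: "1 \<le> l \<Longrightarrow> l \<le> N \<Longrightarrow> MM (X j l) (Proj n l) = X j l"
  unfolding X_def by (simp add: mmult_assoc PP)

lemma QQ_N: "QQ N = 0"
proof -
  have "\<And>l. l \<in> basis N n \<Longrightarrow> \<not> inE n (Suc N) l" by (auto simp: basis_def)
  then show ?thesis by (auto simp: fun_eq_iff mmult_def adj_def Zop_entry intro!: sum.neutral)
qed

lemma QQ_idem': "1 \<le> j \<Longrightarrow> j \<le> N \<Longrightarrow> MM (QQ j) (QQ j) = QQ j"
  using QQ_idem[of j] QQ_N by (cases "j = N") auto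

lemma UG1: assumes "1 \<le> j" "j \<le> N" shows "MM (QQ j) (Gj j) = smult (Aj j + Bj j) (QQ j)"
  unfolding Gj_def using assms by (simp add: mmult_add_right mmult_smult_right QQ_idem' QP smult_add_left)

lemma UG2: assumes "1 \<le> j" "j \<le> N" shows "MM (Proj n j - QQ j) (Gj j) = smult (Bj j) (Proj n j - QQ j)"
  unfolding Gj_def using assms
  by (simp add: mmult_add_right mmult_smult_right mmult_diff_left QQ_idem' QP PQ PP smult_diff)

lemma GV1: assumes "1 \<le> j" "j \<le> N" shows "MM (Gj' j) (QQ j) = smult (cnj (Aj j) + cnj (Bj j)) (QQ j)"
  unfolding Gj'_def using assms by (simp add: mmult_add_left mmult_smult_left QQ_idem' PQ smult_add_left)

lemma GV2: assumes "1 \<le> j" "j \<le> N" shows "MM (Gj' j) (Proj n j - QQ j) = smult (cnj (Bj j)) (Proj n j - QQ j)"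
  unfolding Gj'_def using assms
  by (simp add: mmult_add_left mmult_smult_left mmult_diff_right QQ_idem' QP PQ PP smult_diff)

lemma piece:
  assumes eq: "MM G Y + MM Y G' = 0" and U: "MM U G = smult lam U" and V: "MM G' V = smult mu V"
    and ne: "lam + mu \<noteq> 0"
  shows "MM (MM U Y) V = 0"
proof -
  have "0 = MM (MM U (MM G Y + MM Y G')) V" unfolding eq by simp
  also have "\<dots> = MM (MM (MM U G) Y) V + MM (MM U Y) (MM G' V)"
    by (simp add: mmult_add_left mmult_add_right mmult_assoc)
  also have "\<dots> = smult (lam + mu) (MM (MM U Y) V)"
    unfolding U V by (simp add: mmult_smult_left mmult_smult_right smult_add_left)
  finally have "smult (lam + mu) (MM (MM U Y) V) = 0" by simp
  then show ?thesis using ne by (auto simp: smult_def fun_eq_iff)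
qed

lemma Re_alpha: "1 \<le> k \<Longrightarrow> k < N \<Longrightarrow> Re (alpha k) > 0"
  unfolding alpha_def using Gmpos[OF Wfreq, of k] by auto
lemma Re_bet: "1 \<le> k \<Longrightarrow> k < N \<Longrightarrow> Re (bet k) > 0"
  unfolding bet_def using Gppos[OF Wfreq, of k] by auto

lemma Re_Aj: "Re (Aj j) \<ge> 0" "1 \<le> j \<Longrightarrow> j < N \<Longrightarrow> Re (Aj j) > 0"
  unfolding Aj_def using Re_alpha by (auto simp: less_imp_le)
lemma Re_Bj: "Re (Bj j) \<ge> 0" "2 \<le> j \<Longrightarrow> j \<le> N \<Longrightarrow> Re (Bj j) > 0"
  unfolding Bj_def using Re_bet by (auto simp: less_imp_le)

lemma Re_AB: "1 \<le> j \<Longrightarrow> j \<le> N \<Longrightarrow> Re (Aj j + Bj j) > 0"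
  using Re_Aj[of j] Re_Bj[of j] N2 by (cases "j < N") auto

lemma offdiag: assumes j: "1 \<le> j" "j \<le> N" and l: "1 \<le> l" "l \<le> N" and jl: "j \<noteq> l"
  shows "X j l = 0"
proof -
  have eq: "MM (Gj j) (X j l) + MM (X j l) (Gj' l) = 0" using block_eq[OF j l] jl by simp
  have Bpos: "Re (Bj j) + Re (Bj l) > 0"
    using Re_Bj[of j] Re_Bj[of l] jl j l by (cases "j = 1"; cases "l = 1") auto
  have p11: "MM (MM (QQ j) (X j l)) (QQ l) = 0"
    by (rule piece[OF eq UG1[OF j] GV1[OF l]])
       (use Re_AB[OF j] Re_AB[OF l] in \<open>auto simp: complex_eq_iff\<close>)
  have p12: "MM (MM (QQ j) (X j l)) (Proj n l - QQ l) = 0"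
    by (rule piece[OF eq UG1[OF j] GV2[OF l]])
       (use Re_AB[OF j] Re_Bj(1)[of l] in \<open>auto simp: complex_eq_iff\<close>)
  have p21: "MM (MM (Proj n j - QQ j) (X j l)) (QQ l) = 0"
    by (rule piece[OF eq UG2[OF j] GV1[OF l]])
       (use Re_AB[OF l] Re_Bj(1)[of j] in \<open>auto simp: complex_eq_iff\<close>)
  have p22: "MM (MM (Proj n j - QQ j) (X j l)) (Proj n l - QQ l) = 0"
    by (rule piece[OF eq UG2[OF j] GV2[OF l]])
       (use Bpos in \<open>auto simp: complex_eq_iff\<close>)
  have "X j l = MM (MM (Proj n j) (X j l)) (Proj n l)" using PX[OF j] XP[OF l] by simp
  also have "\<dots> = MM (MM ((Proj n j - QQ j) + QQ j) (X j l)) ((Proj n l - QQ l) + QQ l)" by simp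
  also have "\<dots> = 0" unfolding mmult_add_left mmult_add_right p11 p12 p21 p22 by simp
  finally show ?thesis .
qed

end



context inv begin

lemma opR: "is_op N n R" using st unfolding is_state_def by auto

lemma ket_sum_left: "q \<in> basis N n \<Longrightarrow> (\<Sum>p\<in>basis N n. cnj (ket q p) * R p i') = R q i'"
proof -
  assume q: "q \<in> basis N n"
  have "(\<Sum>p\<in>basis N n. cnj (ket q p) * R p i') = (\<Sum>p\<in>basis N n. if p = q then R q i' else 0)"
    unfolding ket_def by (intro sum.cong) auto
  then show ?thesis using q by simp
qed

lemma ket_sum_right: "q \<in> basis N n \<Longrightarrow> (\<Sum>p\<in>basis N n. R i p * ket q p) = R i q"
proof -
  assume q: "q \<in> basis N n"
  have "(\<Sum>p\<in>basis N n. R i p * ket q p) = (\<Sum>p\<in>basis N n. if p = q then R i q else 0)"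
    unfolding ket_def by (intro sum.cong) auto
  then show ?thesis using q by simp
qed

lemma MP_basis: "Minus \<in> basis N n" "Plus \<in> basis N n" unfolding basis_def by auto

lemma R_pm: "R Minus i = 0" "R Plus i = 0" "R i Minus = 0" "R i Plus = 0"
  using row_kill[OF st supp V1(2), of i] row_kill[OF st supp V1(1), of i]
    col_kill[OF st supp V1(2), of i] col_kill[OF st supp V1(1), of i]
  by (simp_all add: ket_sum_left ket_sum_right MP_basis)

lemma R_zero: assumes l: "1 \<le> l" "l \<le> N" and i: "inE n l i" and i': "\<not> inE n l i'"
  shows "R i i' = 0 \<and> R i' i = 0"
proof (cases "i' \<in> basis N n")
  case False
  have "i \<in> basis N n" using inE_basis[OF l i] .
  then show ?thesis using False opR unfolding is_op_def by auto
next
  case True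
  show ?thesis
  proof (cases i')
    case Minus then show ?thesis by (simp add: R_pm)
  next
    case Plus then show ?thesis by (simp add: R_pm)
  next
    case (Site j a)
    then have ja: "1 \<le> j" "j \<le> N" "a < n j" using True unfolding basis_def by auto
    then have ij: "inE n j i'" using Site by simp
    have "j \<noteq> l" using i' ij by auto
    then have "X l j = 0" "X j l = 0" using offdiag ja l by auto
    then have "X l j i i' = 0" "X j l i' i = 0" by auto
    then show ?thesis using X_entry[OF l ja(1,2)] X_entry[OF ja(1,2) l] i ij by auto
  qed
qed

lemma RP: assumes l: "1 \<le> l" "l \<le> N" shows "MM R (Proj n l) = X l l"
  unfolding X_def mmult_Proj_left[OF l] mmult_Proj_right[OF l]
  using R_zero[OF l] by (auto simp: fun_eq_iff)

lemma PR: assumes l: "1 \<le> l" "l \<le> N" shows "MM (Proj n l) R = X l l"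
  unfolding X_def mmult_Proj_left[OF l] mmult_Proj_right[OF l]
  using R_zero[OF l] by (auto simp: fun_eq_iff)

lemma ZRZ: assumes k: "1 \<le> k" "k \<le> N"
  shows "MM (MM (Zop n k) R) (adj (Zop n k)) = MM (MM (Zop n k) (X k k)) (adj (Zop n k))"
proof -
  have "MM (MM (Zop n k) (X k k)) (adj (Zop n k)) = MM (MM (MM (Zop n k) (Proj n k)) R) (MM (Proj n k) (adj (Zop n k)))"
    unfolding X_def by (simp add: mmult_assoc)
  then show ?thesis using k by (simp add: Z_Proj Proj_Zadj)
qed

lemma ZaRZ: assumes k: "1 \<le> k" "Suc k \<le> N"
  shows "MM (MM (adj (Zop n k)) R) (Zop n k) = MM (MM (adj (Zop n k)) (X (Suc k) (Suc k))) (Zop n k)"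
proof -
  have "MM (MM (adj (Zop n k)) (X (Suc k) (Suc k))) (Zop n k)
      = MM (MM (MM (adj (Zop n k)) (Proj n (Suc k))) R) (MM (Proj n (Suc k)) (Zop n k))"
    unfolding X_def by (simp add: mmult_assoc)
  then show ?thesis using k by (simp add: Zadj_Proj Proj_Z)
qed

lemma alpha_cnj: "alpha k + cnj (alpha k) = of_real (Gm (W k))"
  unfolding alpha_def by (simp add: complex_eq_iff)
lemma bet_cnj: "bet k + cnj (bet k) = of_real (Gp (W k))"
  unfolding bet_def by (simp add: complex_eq_iff)

lemma diag_step: assumes k: "1 \<le> k" "k < N"
  and In: "Inj k = smult (Bj k + cnj (Bj k)) (X k k)"
  shows "smult (of_real (Gp (W k))) (X (Suc k) (Suc k)) = smult (of_real (Gm (W k))) (MM (MM (Zop n k) (X k k)) (adj (Zop n k)))"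
    and "MM (MM (Zop n k) (X k k)) (Proj n k - QQ k) = 0"
proof -
  have k': "1 \<le> k" "k \<le> N" "1 \<le> Suc k" "Suc k \<le> N" using k by auto
  define Z where "Z = Zop n k"
  define X0 where "X0 = X k k"
  define X1 where "X1 = X (Suc k) (Suc k)"
  define Q where "Q = QQ k"
  have eq: "Inj k + Outj k = MM (Gj k) X0 + MM X0 (Gj' k)" using block_eq[OF k'(1,2) k'(1,2)] unfolding X0_def by simp
  have g1: "MM (Gj k) X0 = smult (alpha k) (MM Q X0) + smult (Bj k) X0"
    unfolding Gj_def X0_def Q_def using k by (simp add: mmult_add_left mmult_smult_left PX Aj_def)
  have g2: "MM X0 (Gj' k) = smult (cnj (alpha k)) (MM X0 Q) + smult (cnj (Bj k)) X0"
    unfolding Gj'_def X0_def Q_def using k by (simp add: mmult_add_right mmult_smult_right XP Aj_def)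
  have out: "Outj k = smult (of_real (Gp (W k))) (MM (MM (adj Z) X1) Z)"
    unfolding Outj_def Z_def X1_def using k ZaRZ[OF k'(1,4)] by simp
  have K: "smult (of_real (Gp (W k))) (MM (MM (adj Z) X1) Z) = smult (alpha k) (MM Q X0) + smult (cnj (alpha k)) (MM X0 Q)"
  proof -
    have "Inj k + Outj k = smult (alpha k) (MM Q X0) + smult (cnj (alpha k)) (MM X0 Q) + smult (Bj k + cnj (Bj k)) X0"
      unfolding eq g1 g2 by (simp add: fun_eq_iff smult_def algebra_simps)
    then show ?thesis unfolding In out X0_def[symmetric] by (simp add: fun_eq_iff smult_def algebra_simps)
  qed
  have ZZ: "MM Z (adj Z) = Proj n (Suc k)" unfolding Z_def using ZZa k by auto
  have ZQ': "MM Z Q = Z" unfolding Z_def Q_def using ZQ k by auto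
  have QZ': "MM Q (adj Z) = adj Z" unfolding Z_def Q_def using QZa k by auto
  have ZP: "MM Z (Proj n k) = Z" unfolding Z_def using Z_Proj k'(1,2) by simp
  have QP': "MM Q (Proj n k) = Q" unfolding Q_def Z_def[symmetric] by (simp add: mmult_assoc ZP)
  have QQ': "MM Q Q = Q" unfolding Q_def using QQ_idem k by simp
  have PX1: "MM (Proj n (Suc k)) X1 = X1" "MM X1 (Proj n (Suc k)) = X1"
    unfolding X1_def using PX XP k'(3,4) by auto
  have "MM (MM Z (smult (of_real (Gp (W k))) (MM (MM (adj Z) X1) Z))) (adj Z)
      = smult (of_real (Gp (W k))) (MM (MM (MM Z (adj Z)) X1) (MM Z (adj Z)))"
    by (simp add: mmult_smult_left mmult_smult_right mmult_assoc)
  also have "\<dots> = smult (of_real (Gp (W k))) X1" unfolding ZZ PX1 ..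
  finally have a1: "MM (MM Z (smult (of_real (Gp (W k))) (MM (MM (adj Z) X1) Z))) (adj Z) = smult (of_real (Gp (W k))) X1" .
  have "MM (MM Z (smult (alpha k) (MM Q X0) + smult (cnj (alpha k)) (MM X0 Q))) (adj Z)
      = smult (alpha k) (MM (MM (MM Z Q) X0) (adj Z)) + smult (cnj (alpha k)) (MM (MM Z X0) (MM Q (adj Z)))"
    by (simp add: mmult_add_left mmult_add_right mmult_smult_left mmult_smult_right mmult_assoc)
  also have "\<dots> = smult (of_real (Gm (W k))) (MM (MM Z X0) (adj Z))"
    unfolding ZQ' QZ' by (simp add: smult_add_left[symmetric] alpha_cnj)
  finally have a2: "MM (MM Z (smult (alpha k) (MM Q X0) + smult (cnj (alpha k)) (MM X0 Q))) (adj Z) = smult (of_real (Gm (W k))) (MM (MM Z X0) (adj Z))" .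
  show "smult (of_real (Gp (W k))) (X (Suc k) (Suc k)) = smult (of_real (Gm (W k))) (MM (MM (Zop n k) (X k k)) (adj (Zop n k)))"
    using a1 a2 K unfolding X1_def X0_def Z_def by simp
  have ZPQ: "MM Z (Proj n k - QQ k) = 0" unfolding mmult_diff_right ZP ZQ'[unfolded Q_def] by simp
  have QPQ: "MM Q (Proj n k - QQ k) = 0" using QP' QQ' unfolding Q_def mmult_diff_right by simp
  have "MM (MM Z (smult (of_real (Gp (W k))) (MM (MM (adj Z) X1) Z))) (Proj n k - QQ k)
      = smult (of_real (Gp (W k))) (MM (MM (MM Z (adj Z)) X1) (MM Z (Proj n k - QQ k)))"
    by (simp add: mmult_smult_left mmult_smult_right mmult_assoc)
  also have "\<dots> = 0" unfolding ZPQ by simp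
  finally have b1: "MM (MM Z (smult (of_real (Gp (W k))) (MM (MM (adj Z) X1) Z))) (Proj n k - QQ k) = 0" .
  have "MM (MM Z (smult (alpha k) (MM Q X0) + smult (cnj (alpha k)) (MM X0 Q))) (Proj n k - QQ k)
      = smult (alpha k) (MM (MM (MM Z Q) X0) (Proj n k - QQ k)) + smult (cnj (alpha k)) (MM (MM Z X0) (MM Q (Proj n k - QQ k)))"
    by (simp add: mmult_add_left mmult_add_right mmult_smult_left mmult_smult_right mmult_assoc)
  also have "\<dots> = smult (alpha k) (MM (MM Z X0) (Proj n k - QQ k))"
    unfolding ZQ' QPQ by simp
  finally have b2: "MM (MM Z (smult (alpha k) (MM Q X0) + smult (cnj (alpha k)) (MM X0 Q))) (Proj n k - QQ k) = smult (alpha k) (MM (MM Z X0) (Proj n k - QQ k))" .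
  have "smult (alpha k) (MM (MM Z X0) (Proj n k - QQ k)) = 0" using b1 b2 K by simp
  moreover have "alpha k \<noteq> 0" using Re_alpha[OF k] by auto
  ultimately show "MM (MM (Zop n k) (X k k)) (Proj n k - QQ k) = 0"
    unfolding Z_def X0_def by (auto simp: smult_def fun_eq_iff)
qed

lemma diag: "1 \<le> k \<Longrightarrow> k < N \<Longrightarrow>
   smult (of_real (Gp (W k))) (X (Suc k) (Suc k)) = smult (of_real (Gm (W k))) (MM (MM (Zop n k) (X k k)) (adj (Zop n k)))
   \<and> MM (MM (Zop n k) (X k k)) (Proj n k - QQ k) = 0"
proof (induction k)
  case 0 then show ?case by simp
next
  case (Suc m)
  have In: "Inj (Suc m) = smult (Bj (Suc m) + cnj (Bj (Suc m))) (X (Suc m) (Suc m))"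
  proof (cases "m = 0")
    case True
    then show ?thesis by (simp add: Inj_def Bj_def)
  next
    case False
    then have m: "1 \<le> m" "m < N" using Suc by auto
    have IH: "smult (of_real (Gp (W m))) (X (Suc m) (Suc m)) = smult (of_real (Gm (W m))) (MM (MM (Zop n m) (X m m)) (adj (Zop n m)))"
      using Suc.IH m by auto
    have "Inj (Suc m) = smult (of_real (Gm (W m))) (MM (MM (Zop n m) R) (adj (Zop n m)))"
      unfolding Inj_def using m Suc.prems by simp
    also have "\<dots> = smult (of_real (Gm (W m))) (MM (MM (Zop n m) (X m m)) (adj (Zop n m)))"
      using ZRZ[of m] m by simp
    also have "\<dots> = smult (of_real (Gp (W m))) (X (Suc m) (Suc m))" using IH by simp
    also have "of_real (Gp (W m)) = Bj (Suc m) + cnj (Bj (Suc m))"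
      unfolding Bj_def using m Suc.prems by (simp add: bet_cnj)
    finally show ?thesis .
  qed
  show ?case using diag_step(1)[OF Suc.prems In] diag_step(2)[OF Suc.prems In] by blast
qed

lemma final: assumes k: "k \<in> {1..N-1}"
  shows "MM R (Zop n k) = smult (complex_of_real (exp (beta Gm Gp k))) (MM (Zop n k) R)"
proof -
  have k': "1 \<le> k" "k < N" "k \<le> N" "1 \<le> Suc k" "Suc k \<le> N" using k N2 by auto
  have gm: "Gm (W k) > 0" and gp: "Gp (W k) > 0" using Gmpos[OF Wfreq[OF k]] Gppos[OF Wfreq[OF k]] .
  have e: "exp (beta Gm Gp k) = Gm (W k) / Gp (W k)" unfolding beta_def using gm gp by simp
  have RZ: "MM R (Zop n k) = MM (X (Suc k) (Suc k)) (Zop n k)"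
  proof -
    have "MM R (Zop n k) = MM R (MM (Proj n (Suc k)) (Zop n k))" using Proj_Z[OF k'(4,5)] by simp
    then show ?thesis by (simp add: mmult_assoc[symmetric] RP[OF k'(4,5)])
  qed
  have ZR: "MM (Zop n k) R = MM (Zop n k) (X k k)"
  proof -
    have "MM (Zop n k) R = MM (MM (Zop n k) (Proj n k)) R" using Z_Proj[OF k'(1,3)] by simp
    then show ?thesis by (simp add: mmult_assoc PR[OF k'(1,3)])
  qed
  have D1: "smult (of_real (Gp (W k))) (X (Suc k) (Suc k)) = smult (of_real (Gm (W k))) (MM (MM (Zop n k) (X k k)) (adj (Zop n k)))"
   and D2: "MM (MM (Zop n k) (X k k)) (Proj n k - QQ k) = 0" using diag[OF k'(1,2)] by auto
  have ZXQ: "MM (MM (Zop n k) (X k k)) (QQ k) = MM (Zop n k) (X k k)"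
  proof -
    have "MM (MM (Zop n k) (X k k)) (Proj n k) = MM (Zop n k) (X k k)" by (simp add: mmult_assoc XP[OF k'(1,3)])
    then show ?thesis using D2 unfolding mmult_diff_right by simp
  qed
  have "smult (of_real (Gp (W k))) (MM (X (Suc k) (Suc k)) (Zop n k))
      = MM (smult (of_real (Gp (W k))) (X (Suc k) (Suc k))) (Zop n k)" by (simp add: mmult_smult_left)
  also have "\<dots> = smult (of_real (Gm (W k))) (MM (MM (MM (Zop n k) (X k k)) (adj (Zop n k))) (Zop n k))"
    unfolding D1 by (simp add: mmult_smult_left)
  also have "\<dots> = smult (of_real (Gm (W k))) (MM (Zop n k) (X k k))"
    using ZXQ by (simp add: mmult_assoc)
  finally have F: "smult (of_real (Gp (W k))) (MM R (Zop n k)) = smult (of_real (Gm (W k))) (MM (Zop n k) R)"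
    unfolding RZ ZR .
  show ?thesis
  proof (intro ext)
    fix i j
    have "of_real (Gp (W k)) * MM R (Zop n k) i j = of_real (Gm (W k)) * MM (Zop n k) R i j"
      using F unfolding smult_def by meson
    then show "MM R (Zop n k) i j = smult (complex_of_real (exp (beta Gm Gp k))) (MM (Zop n k) R) i j"
      unfolding smult_def e using gp by (simp add: field_simps)
  qed
qed

end


theorem corollary3p9:
  fixes N :: nat and n :: "nat \<Rightarrow> nat"
    and Gm Gp gm gp :: "freq \<Rightarrow> real" and \<rho> :: op
  assumes "N \<ge> 2"
    and "\<And>k. 1 \<le> k \<Longrightarrow> k \<le> N \<Longrightarrow> n k \<ge> 1"
    and "\<And>k. 1 \<le> k \<Longrightarrow> k < N \<Longrightarrow> n (Suc k) \<le> n k"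
    and "\<And>w. w \<in> freqs N \<Longrightarrow> Gm w > 0"
    and "\<And>w. w \<in> freqs N \<Longrightarrow> Gp w > 0"
    and "is_state N n \<rho>"
    and "lindblad N n Gm Gp gm gp \<rho> = (\<lambda>i j. 0)"
    and "supported_Omega N n \<rho>"
  shows "\<forall>k\<in>{1..N-1}. mmult N n \<rho> (Zop n k)
           = smult (complex_of_real (exp (beta Gm Gp k))) (mmult N n (Zop n k) \<rho>)"
proof -
  interpret I: inv N n Gm Gp gm gp \<rho>
    by (unfold_locales) (use assms in auto)
  show ?thesis using I.final by blast
qed

end
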